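(* Let $L>0$, $g>0$, and let $\bar\rho=\bar\rho(x_3)\in L^\infty(\mathbb{R})$ satisfy $\bar\rho'\in C_0^\infty(\mathbb{R})$, $\inf_{\mathbb{R}}\bar\rho>0$ and $\bar\rho'(x_3^0)>0$ for some $x_3^0$. Let $M_{\mathrm c}$, $S(\xi)$, $|\xi|^M_{\mathrm{vc}}$ and $\mathbb{A}^{\mathrm g}$ be as defined in the context (for either the horizontal case $M\ne0$ or the vertical case $|M|\in(0,M_{\mathrm c})$). Then: (1) the set $\mathbb{A}^{\mathrm g}$ is symmetric with respect to the $x$-axis and with respect to the $y$-axis of $\mathbb{R}^2$; (2) countably infinitely many lattice points of $(L^{-1}\mathbb{Z})^2$ belong to $\mathbb{A}^{\mathrm g}$; (3) $\mathbb{A}^{\mathrm g}$ is a nonempty open subset of $\mathbb{R}^2$.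
   Context: All functions $\psi$ below are real-valued functions of $x_3\in\mathbb{R}$ and $'=d/dx_3$. $M_{\mathrm c}:=\sqrt{\sup_{\psi\in H^1(\mathbb{R}),\psi\not\equiv0}\int_{\mathbb{R}}g\bar\rho'\psi^2dx_3/\int_{\mathbb{R}}|\psi'|^2dx_3}\in(0,\infty]$. Horizontal case ($\bar{\mathbf M}=M\mathbf e_1$, $M\neq0$): for $\xi=(\xi_1,\xi_2)$ with $0<|M\xi_1|/|\xi|<M_{\mathrm c}$, $S(\xi):=\sqrt{\sup_{\psi\in H^1(\mathbb{R}),\psi\not\equiv0}\big(g|\xi|^2\int\bar\rho'\psi^2dx_3/(M\xi_1)^2-\int|\psi'|^2dx_3\big)/\int|\psi|^2dx_3}$, and $\mathbb{A}^{\mathrm g}:=\big(\{\xi\in\mathbb{R}^2: |\xi_1M|/|\xi|\in(0,M_{\mathrm c}),\ |\xi|<S(\xi)\}\cup\{\xi:\xi_1=0\}\big)\setminus\{\mathbf 0\}$. Vertical case ($\bar{\mathbf M}=M\mathbf e_3$, $|M|\in(0,M_{\mathrm c})$): with $\mathcal M_{\mathrm{vc}}:=\{\psi\in H^2(\mathbb{R}):\int_{\mathbb{R}}(g\bar\rho'\psi^2-M^2|\psi'|^2)dx_3>0\}$, $|\xi|^M_{\mathrm{vc}}:=\sqrt{\inf_{\psi\in\mathcal M_{\mathrm{vc}}}M^2\int|\psi''|^2dx_3/\int(g\bar\rho'\psi^2-M^2|\psi'|^2)dx_3}$ (a finite nonnegative constant), and $\mathbb{A}^{\mathrm g}:=\{\xi\in\mathbb{R}^2:|\xi|^M_{\mathrm{vc}}<|\xi|\}$.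 *)

theory Defs
  imports "HOL-Analysis.Analysis"
begin

definition test_fun :: "(real \<Rightarrow> real) \<Rightarrow> bool" where
  "test_fun \<phi> \<longleftrightarrow> (\<forall>n x. ((deriv ^^ n) \<phi>) differentiable (at x)) \<and>
                      (\<exists>R. \<forall>x. R < \<bar>x\<bar> \<longrightarrow> \<phi> x = 0)"

definition L2 :: "(real \<Rightarrow> real) \<Rightarrow> bool" where
  "L2 f \<longleftrightarrow> f \<in> borel_measurable lborel \<and> integrable lborel (\<lambda>x. (f x)\<^sup>2)"

definition weak_deriv :: "(real \<Rightarrow> real) \<Rightarrow> (real \<Rightarrow> real) \<Rightarrow> bool" where
  "weak_deriv f f' \<longleftrightarrow> (\<forall>\<phi>. test_fun \<phi> \<longrightarrow>
      integrable lborel (\<lambda>x. f x * deriv \<phi> x) \<and> integrable lborel (\<lambda>x. f' x * \<phi> x) \<and>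
      (\<integral>x. f x * deriv \<phi> x \<partial>lborel) = - (\<integral>x. f' x * \<phi> x \<partial>lborel))"

definition H1 :: "(real \<Rightarrow> real) \<Rightarrow> (real \<Rightarrow> real) \<Rightarrow> bool" where
  "H1 \<psi> \<psi>' \<longleftrightarrow> L2 \<psi> \<and> L2 \<psi>' \<and> weak_deriv \<psi> \<psi>'"

definition H2 :: "(real \<Rightarrow> real) \<Rightarrow> (real \<Rightarrow> real) \<Rightarrow> (real \<Rightarrow> real) \<Rightarrow> bool" where
  "H2 \<psi> \<psi>' \<psi>'' \<longleftrightarrow> H1 \<psi> \<psi>' \<and> H1 \<psi>' \<psi>''"

text \<open>Square of M_c, as an extended real (dr stands for the derivative of the density).\<close>
definition Mc_sq :: "real \<Rightarrow> (real \<Rightarrow> real) \<Rightarrow> ereal" where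
  "Mc_sq g dr = Sup {ereal ((\<integral>x. g * dr x * (\<psi> x)\<^sup>2 \<partial>lborel) / (\<integral>x. (\<psi>' x)\<^sup>2 \<partial>lborel)) |\<psi> \<psi>'.
                        H1 \<psi> \<psi>' \<and> \<not> (AE x in lborel. \<psi> x = 0)}"

definition Mc :: "real \<Rightarrow> (real \<Rightarrow> real) \<Rightarrow> ereal" where
  "Mc g dr = (if Mc_sq g dr = \<infinity> then \<infinity> else ereal (sqrt (real_of_ereal (Mc_sq g dr))))"

definition S_fun :: "real \<Rightarrow> (real \<Rightarrow> real) \<Rightarrow> real \<Rightarrow> real \<times> real \<Rightarrow> real" where
  "S_fun g dr M \<xi> = sqrt (Sup {((g * (norm \<xi>)\<^sup>2 * (\<integral>x. dr x * (\<psi> x)\<^sup>2 \<partial>lborel) / (M * fst \<xi>)\<^sup>2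
                                - (\<integral>x. (\<psi>' x)\<^sup>2 \<partial>lborel)) / (\<integral>x. (\<psi> x)\<^sup>2 \<partial>lborel)) |\<psi> \<psi>'.
                        H1 \<psi> \<psi>' \<and> \<not> (AE x in lborel. \<psi> x = 0)})"

text \<open>The set A^g in the horizontal case (background field M e_1).\<close>
definition Ag_hor :: "real \<Rightarrow> (real \<Rightarrow> real) \<Rightarrow> real \<Rightarrow> (real \<times> real) set" where
  "Ag_hor g dr M = ({\<xi>. 0 < \<bar>fst \<xi> * M\<bar> / norm \<xi> \<and> ereal (\<bar>fst \<xi> * M\<bar> / norm \<xi>) < Mc g dr
                        \<and> norm \<xi> < S_fun g dr M \<xi>} \<union> {\<xi>. fst \<xi> = 0}) - {0}"

definition xi_vc :: "real \<Rightarrow> (real \<Rightarrow> real) \<Rightarrow> real \<Rightarrow> real" where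
  "xi_vc g dr M = sqrt (Inf {M\<^sup>2 * (\<integral>x. (\<psi>'' x)\<^sup>2 \<partial>lborel) /
        (\<integral>x. g * dr x * (\<psi> x)\<^sup>2 - M\<^sup>2 * (\<psi>' x)\<^sup>2 \<partial>lborel) |\<psi> \<psi>' \<psi>''.
        H2 \<psi> \<psi>' \<psi>'' \<and> (\<integral>x. g * dr x * (\<psi> x)\<^sup>2 - M\<^sup>2 * (\<psi>' x)\<^sup>2 \<partial>lborel) > 0})"

text \<open>The set A^g in the vertical case (background field M e_3).\<close>
definition Ag_ver :: "real \<Rightarrow> (real \<Rightarrow> real) \<Rightarrow> real \<Rightarrow> (real \<times> real) set" where
  "Ag_ver g dr M = {\<xi>. xi_vc g dr M < norm \<xi>}"

definition Ag_props :: "real \<Rightarrow> (real \<times> real) set \<Rightarrow> bool" where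
  "Ag_props L A \<longleftrightarrow>
     (\<forall>a b. (a, b) \<in> A \<longrightarrow> (a, - b) \<in> A \<and> (- a, b) \<in> A) \<and>
     (let P = {\<xi> \<in> A. \<exists>m n :: int. \<xi> = (of_int m / L, of_int n / L)} in countable P \<and> infinite P) \<and>
     (A \<noteq> {} \<and> open A)"

end

theory Submission
  imports Defs
begin

lemma cs_integrable:
  fixes f :: "real \<Rightarrow> real"
  assumes c: "continuous_on UNIV f" and z: "\<And>x. x \<notin> {a..b} \<Longrightarrow> f x = 0"
  shows "integrable lborel f" "(\<integral>x. f x \<partial>lborel) = integral {a..b} f"
proof -
  have eq: "(\<lambda>x. indicat_real {a..b} x *\<^sub>R f x) = f"
    using z by (auto simp: indicator_def fun_eq_iff)
  have si: "set_integrable lborel {a..b} f"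
    unfolding set_integrable_def
    by (rule borel_integrable_compact) (auto intro: continuous_on_subset[OF c])
  then show "integrable lborel f" unfolding set_integrable_def eq .
  show "(\<integral>x. f x \<partial>lborel) = integral {a..b} f"
    using set_borel_integral_eq_integral(2)[OF si] unfolding set_lebesgue_integral_def eq .
qed

lemma not_AE_zero:
  fixes f :: "real \<Rightarrow> real"
  assumes "a < b" "\<And>x. x \<in> {a<..<b} \<Longrightarrow> f x \<noteq> 0"
  shows "\<not> (AE x in lborel. f x = 0)"
proof
  assume "AE x in lborel. f x = 0"
  then have "AE x in lborel. x \<notin> {a<..<b}"
    by eventually_elim (use assms in auto)
  moreover have "(AE x in lborel. x \<notin> {a<..<b}) = (emeasure lborel {a<..<b} = 0)"
    by (rule AE_iff_measurable) auto
  ultimately show False using assms(1) by (simp add: emeasure_lborel_Ioo)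
qed

lemma pos_integral:
  fixes f :: "real \<Rightarrow> real"
  assumes "integrable lborel f" "\<And>x. 0 \<le> f x" "a < b" "\<And>x. x \<in> {a<..<b} \<Longrightarrow> 0 < f x"
  shows "0 < (\<integral>x. f x \<partial>lborel)"
proof -
  have "(\<integral>x. f x \<partial>lborel) \<noteq> 0"
    using integral_nonneg_eq_0_iff_AE[OF assms(1)] not_AE_zero[of a b f] assms by force
  moreover have "0 \<le> (\<integral>x. f x \<partial>lborel)" using assms(2) by (simp add: integral_nonneg)
  ultimately show ?thesis by linarith
qed


lemma test_fun_facts:
  assumes "test_fun \<phi>"
  shows "continuous_on UNIV \<phi>" "continuous_on UNIV (deriv \<phi>)"
        "\<And>x. (\<phi> has_real_derivative deriv \<phi> x) (at x)"
proof -
  have d: "\<And>n x. ((deriv ^^ n) \<phi>) differentiable (at x)" using assms unfolding test_fun_def by blast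
  from d[of 0] show "continuous_on UNIV \<phi>"
    by (simp add: continuous_at_imp_continuous_on differentiable_imp_continuous_within)
  from d[of 1] show "continuous_on UNIV (deriv \<phi>)"
    by (simp add: continuous_at_imp_continuous_on differentiable_imp_continuous_within)
  from d[of 0] show "\<And>x. (\<phi> has_real_derivative deriv \<phi> x) (at x)"
    by (simp add: DERIV_deriv_iff_real_differentiable)
qed

lemma cont_meas: "continuous_on UNIV (f::real\<Rightarrow>real) \<Longrightarrow> f \<in> borel_measurable lborel"
  using borel_measurable_continuous_onI by (simp add: measurable_lborel1)

lemma bump_exists:
  fixes dr :: "real \<Rightarrow> real"
  assumes cd: "continuous_on UNIV dr" and pos: "dr x0 > 0"
  shows "\<exists>\<psi> \<psi>'. H1 \<psi> \<psi>' \<and> \<not>(AE x in lborel. \<psi> x = 0) \<and> 0 < (\<integral>x. dr x * (\<psi> x)\<^sup>2 \<partial>lborel)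
           \<and> 0 < (\<integral>x. (\<psi>' x)\<^sup>2 \<partial>lborel)"
proof -
  have "open {x. 0 < dr x}" by (rule open_Collect_less) (auto intro: cd)
  moreover have "x0 \<in> {x. 0 < dr x}" using pos by simp
  ultimately obtain \<delta> where dp: "\<delta> > 0" and db: "ball x0 \<delta> \<subseteq> {x. 0 < dr x}"
    by (meson openE)
  have drpos: "dr x > 0" if "\<bar>x - x0\<bar> < \<delta>" for x
    using db that by (auto simp: dist_real_def abs_minus_commute)
  define u where "u x = max 0 (\<delta>\<^sup>2 - (x - x0)\<^sup>2)" for x
  define \<psi> where "\<psi> x = (u x)\<^sup>2" for x
  define \<psi>' where "\<psi>' x = -4 * (x - x0) * u x" for x
  define a where "a = x0 - \<delta>"
  define b where "b = x0 + \<delta>"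
  have ab: "a < b" using dp by (simp add: a_def b_def)
  have u0: "u x = 0" if "x \<notin> {a..b}" for x
  proof -
    have "\<delta> \<le> \<bar>x - x0\<bar>" using that by (auto simp: a_def b_def)
    then have "\<delta>\<^sup>2 \<le> \<bar>x - x0\<bar>\<^sup>2" using dp by (intro power_mono) auto
    then show ?thesis by (simp add: u_def)
  qed
  have uin: "u x = \<delta>\<^sup>2 - (x - x0)\<^sup>2" if "x \<in> {a..b}" for x
  proof -
    have "\<bar>x - x0\<bar> \<le> \<delta>" using that by (auto simp: a_def b_def)
    then have "\<bar>x - x0\<bar>\<^sup>2 \<le> \<delta>\<^sup>2" by (intro power_mono) auto
    then show ?thesis by (simp add: u_def)
  qed
  have upos: "u x > 0" if "x \<in> {a<..<b}" for x
  proof -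
    have "\<bar>x - x0\<bar> < \<delta>" using that by (auto simp: a_def b_def)
    then have "\<bar>x - x0\<bar>\<^sup>2 < \<delta>\<^sup>2" by (intro power_strict_mono) auto
    then show ?thesis by (simp add: u_def)
  qed
  have cu: "continuous_on UNIV u" unfolding u_def by (intro continuous_intros)
  have cpsi: "continuous_on UNIV \<psi>" unfolding \<psi>_def by (intro continuous_intros cu)
  have cpsi': "continuous_on UNIV \<psi>'" unfolding \<psi>'_def by (intro continuous_intros cu)
  have L2psi: "L2 \<psi>" unfolding L2_def
    using cont_meas[OF cpsi] by (auto intro!: cs_integrable(1)[of _ a b] continuous_intros cu simp: \<psi>_def u0)
  have L2psi': "L2 \<psi>'" unfolding L2_def
    using cont_meas[OF cpsi'] by (auto intro!: cs_integrable(1)[of _ a b] continuous_intros cu simp: \<psi>'_def u0)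
  have wd: "weak_deriv \<psi> \<psi>'" unfolding weak_deriv_def
  proof (intro allI impI conjI)
    fix \<phi> assume tf: "test_fun \<phi>"
    note tff = test_fun_facts[OF tf]
    have c1: "continuous_on UNIV (\<lambda>x. \<psi> x * deriv \<phi> x)" by (intro continuous_intros cpsi tff)
    have c2: "continuous_on UNIV (\<lambda>x. \<psi>' x * \<phi> x)" by (intro continuous_intros cpsi' tff)
    have z1: "\<psi> x * deriv \<phi> x = 0" if "x \<notin> {a..b}" for x using u0[OF that] by (simp add: \<psi>_def)
    have z2: "\<psi>' x * \<phi> x = 0" if "x \<notin> {a..b}" for x using u0[OF that] by (simp add: \<psi>'_def)
    show i1: "integrable lborel (\<lambda>x. \<psi> x * deriv \<phi> x)" by (rule cs_integrable(1)[OF c1 z1])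
    show i2: "integrable lborel (\<lambda>x. \<psi>' x * \<phi> x)" by (rule cs_integrable(1)[OF c2 z2])
    have c3: "continuous_on UNIV (\<lambda>x. \<psi> x * deriv \<phi> x + \<psi>' x * \<phi> x)" by (intro continuous_intros c1 c2)
    have "(\<integral>x. \<psi> x * deriv \<phi> x \<partial>lborel) + (\<integral>x. \<psi>' x * \<phi> x \<partial>lborel)
        = (\<integral>x. \<psi> x * deriv \<phi> x + \<psi>' x * \<phi> x \<partial>lborel)" using i1 i2 by simp
    also have "\<dots> = integral {a..b} (\<lambda>x. \<psi> x * deriv \<phi> x + \<psi>' x * \<phi> x)"
      by (rule cs_integrable(2)[OF c3]) (simp add: z1 z2)
    also have "\<dots> = 0"
    proof -
      define F where "F x = (\<delta>\<^sup>2 - (x - x0)\<^sup>2)\<^sup>2 * \<phi> x" for x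
      define F' where "F' x = 2 * (\<delta>\<^sup>2 - (x - x0)\<^sup>2) * (- (2 * (x - x0))) * \<phi> x
                            + (\<delta>\<^sup>2 - (x - x0)\<^sup>2)\<^sup>2 * deriv \<phi> x" for x
      have "(F has_real_derivative F' x) (at x)" for x
        unfolding F_def F'_def
        by (rule derivative_eq_intros tff(3) refl | simp)+
      then have "(F' has_integral F b - F a) {a..b}"
        by (intro fundamental_theorem_of_calculus)
           (use ab in \<open>auto simp: has_real_derivative_iff_has_vector_derivative[symmetric] intro: has_field_derivative_at_within\<close>)
      moreover have "F b - F a = 0" by (simp add: F_def a_def b_def)
      moreover have "F' x = \<psi> x * deriv \<phi> x + \<psi>' x * \<phi> x" if "x \<in> {a..b}" for x
        unfolding F'_def \<psi>_def \<psi>'_def uin[OF that] by (simp add: algebra_simps power2_eq_square)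
      ultimately have "((\<lambda>x. \<psi> x * deriv \<phi> x + \<psi>' x * \<phi> x) has_integral 0) {a..b}"
        using has_integral_eq by (metis (no_types, lifting))
      then show ?thesis by (rule integral_unique)
    qed
    finally show "(\<integral>x. \<psi> x * deriv \<phi> x \<partial>lborel) = - (\<integral>x. \<psi>' x * \<phi> x \<partial>lborel)" by linarith
  qed
  have H: "H1 \<psi> \<psi>'" using L2psi L2psi' wd by (simp add: H1_def)
  have nAE: "\<not>(AE x in lborel. \<psi> x = 0)"
    by (rule not_AE_zero[OF ab]) (use upos in \<open>fastforce simp: \<psi>_def\<close>)
  have P: "0 < (\<integral>x. dr x * (\<psi> x)\<^sup>2 \<partial>lborel)"
  proof (rule pos_integral[OF _ _ ab])
    show "integrable lborel (\<lambda>x. dr x * (\<psi> x)\<^sup>2)"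
      by (rule cs_integrable(1)[of _ a b]) (auto intro!: continuous_intros cd cu simp: \<psi>_def u0)
    show "0 \<le> dr x * (\<psi> x)\<^sup>2" for x
    proof (cases "\<bar>x - x0\<bar> < \<delta>")
      case True then show ?thesis using drpos[OF True] by simp
    next
      case False then have "x \<notin> {a..b} \<or> x = a \<or> x = b" by (auto simp: a_def b_def)
      then have "u x = 0" using u0 dp by (auto simp: u_def a_def b_def)
      then show ?thesis by (simp add: \<psi>_def)
    qed
    show "0 < dr x * (\<psi> x)\<^sup>2" if "x \<in> {a<..<b}" for x
      using upos[OF that] drpos[of x] that by (auto simp: \<psi>_def a_def b_def)
  qed
  have D: "0 < (\<integral>x. (\<psi>' x)\<^sup>2 \<partial>lborel)"
  proof (rule pos_integral[of _ x0 b])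
    show "integrable lborel (\<lambda>x. (\<psi>' x)\<^sup>2)"
      by (rule cs_integrable(1)[of _ a b]) (auto intro!: continuous_intros cu simp: \<psi>'_def u0)
    show "x0 < b" using dp by (simp add: b_def)
    show "0 < (\<psi>' x)\<^sup>2" if "x \<in> {x0<..<b}" for x
      using upos[of x] that by (auto simp: \<psi>'_def a_def b_def)
  qed auto
  show ?thesis using H nAE P D by blast
qed


lemma Mc_pos:
  assumes g: "g > 0" and ex: "\<exists>\<psi> \<psi>'. H1 \<psi> \<psi>' \<and> \<not>(AE x in lborel. \<psi> x = 0) \<and> 0 < (\<integral>x. dr x * (\<psi> x)\<^sup>2 \<partial>lborel)
           \<and> 0 < (\<integral>x. (\<psi>' x)\<^sup>2 \<partial>lborel)"
  shows "0 < Mc g dr"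
proof -
  obtain \<psi> \<psi>' where H: "H1 \<psi> \<psi>'" "\<not>(AE x in lborel. \<psi> x = 0)"
    and P: "0 < (\<integral>x. dr x * (\<psi> x)\<^sup>2 \<partial>lborel)" and D: "0 < (\<integral>x. (\<psi>' x)\<^sup>2 \<partial>lborel)"
    using ex by blast
  have eq: "(\<integral>x. g * dr x * (\<psi> x)\<^sup>2 \<partial>lborel) = g * (\<integral>x. dr x * (\<psi> x)\<^sup>2 \<partial>lborel)"
    by (simp add: mult.assoc)
  have "ereal ((\<integral>x. g * dr x * (\<psi> x)\<^sup>2 \<partial>lborel) / (\<integral>x. (\<psi>' x)\<^sup>2 \<partial>lborel)) \<le> Mc_sq g dr"
    unfolding Mc_sq_def by (rule Sup_upper) (use H in blast)
  moreover have "0 < (\<integral>x. g * dr x * (\<psi> x)\<^sup>2 \<partial>lborel) / (\<integral>x. (\<psi>' x)\<^sup>2 \<partial>lborel)"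
    unfolding eq using g P D by simp
  ultimately have pos: "0 < Mc_sq g dr"
    by (meson ereal_less(2) less_le_trans)
  show ?thesis
  proof (cases "Mc_sq g dr")
    case (real r)
    with pos show ?thesis by (simp add: Mc_def)
  next
    case PInf then show ?thesis by (simp add: Mc_def)
  next
    case MInf then show ?thesis using pos by simp
  qed
qed

lemma Ag_ver_gen:
  assumes "L > 0"
  shows "Ag_props L {\<xi>::real\<times>real. c < norm \<xi>}"
  unfolding Ag_props_def Let_def
proof (intro conjI allI impI)
  fix a b :: real assume "(a, b) \<in> {\<xi>. c < norm \<xi>}"
  then show "(a, - b) \<in> {\<xi>. c < norm \<xi>}" "(- a, b) \<in> {\<xi>. c < norm \<xi>}"
    by (auto simp: norm_Pair)
next
  let ?P = "{\<xi> \<in> {\<xi>::real\<times>real. c < norm \<xi>}. \<exists>m n :: int. \<xi> = (of_int m / L, of_int n / L)}"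
  have "?P \<subseteq> (\<lambda>(m::int, n::int). (of_int m / L, of_int n / L)) ` UNIV" by auto
  then show "countable ?P" by (rule countable_subset) simp
  define f where "f n = (of_int n / L, 0::real)" for n :: int
  have "f ` {\<lceil>\<bar>c\<bar> * L\<rceil><..} \<subseteq> ?P"
  proof
    fix \<xi> assume "\<xi> \<in> f ` {\<lceil>\<bar>c\<bar> * L\<rceil><..}"
    then obtain n where n: "n > \<lceil>\<bar>c\<bar> * L\<rceil>" and x: "\<xi> = f n" by auto
    have "\<bar>c\<bar> * L < of_int n" using n by linarith
    then have "\<bar>c\<bar> < of_int n / L" using assms by (simp add: pos_less_divide_eq)
    moreover have "norm \<xi> = \<bar>of_int n / L\<bar>" by (simp add: x f_def norm_Pair)
    ultimately have "c < norm \<xi>" by linarith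
    then show "\<xi> \<in> ?P" using x f_def by auto
  qed
  moreover have "inj_on f {\<lceil>\<bar>c\<bar> * L\<rceil><..}" using assms by (auto simp: inj_on_def f_def)
  ultimately show "infinite ?P"
    by (meson finite_imageD finite_subset infinite_Ioi)
next
  have "(\<bar>c\<bar> + 1, 0) \<in> {\<xi>::real\<times>real. c < norm \<xi>}" by (simp add: norm_Pair)
  then show "{\<xi>::real\<times>real. c < norm \<xi>} \<noteq> {}" by blast
  show "open {\<xi>::real\<times>real. c < norm \<xi>}"
    by (rule open_Collect_less) (intro continuous_intros)+
qed


lemma arith1:
  fixes N D P B q g n :: real
  assumes "N > 0" "D \<ge> 0" "P \<le> B * N" "q \<ge> 0" "g \<ge> 0"
  shows "(g * n\<^sup>2 * P / q - D) / N \<le> g * n\<^sup>2 / q * B"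
proof -
  have a: "g * n\<^sup>2 / q \<ge> 0" using assms by simp
  have "g * n\<^sup>2 * P / q = (g * n\<^sup>2 / q) * P" by simp
  also have "\<dots> \<le> (g * n\<^sup>2 / q) * (B * N)" using assms(3) a by (rule mult_left_mono)
  finally have "g * n\<^sup>2 * P / q - D \<le> (g * n\<^sup>2 / q * B) * N" using assms(2) by (simp add: mult.assoc)
  then show ?thesis using assms(1) by (simp add: pos_divide_le_eq)
qed

lemma arith2:
  fixes N D P q g n :: real
  assumes "N > 0" "q > 0"
  shows "n\<^sup>2 < (g * n\<^sup>2 * P / q - D) / N \<longleftrightarrow> (n\<^sup>2 * N + D) * q < g * n\<^sup>2 * P"
proof -
  have "n\<^sup>2 < (g * n\<^sup>2 * P / q - D) / N \<longleftrightarrow> n\<^sup>2 * N < g * n\<^sup>2 * P / q - D"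
    using assms by (simp add: pos_less_divide_eq)
  also have "\<dots> \<longleftrightarrow> n\<^sup>2 * N + D < g * n\<^sup>2 * P / q" by linarith
  also have "\<dots> \<longleftrightarrow> (n\<^sup>2 * N + D) * q < g * n\<^sup>2 * P"
    using assms by (simp add: pos_less_divide_eq)
  finally show ?thesis .
qed

lemma Psi_facts:
  fixes dr :: "real \<Rightarrow> real"
  assumes H: "H1 \<psi> \<psi>'" and nAE: "\<not>(AE x in lborel. \<psi> x = 0)"
    and B: "\<And>x. \<bar>dr x\<bar> \<le> B" and dm: "dr \<in> borel_measurable lborel"
  shows "0 < (\<integral>x. (\<psi> x)\<^sup>2 \<partial>lborel)" "0 \<le> (\<integral>x. (\<psi>' x)\<^sup>2 \<partial>lborel)"
    "(\<integral>x. dr x * (\<psi> x)\<^sup>2 \<partial>lborel) \<le> B * (\<integral>x. (\<psi> x)\<^sup>2 \<partial>lborel)"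
proof -
  have L: "L2 \<psi>" using H by (simp add: H1_def)
  then have m: "\<psi> \<in> borel_measurable lborel" and i: "integrable lborel (\<lambda>x. (\<psi> x)\<^sup>2)"
    by (auto simp: L2_def)
  have "(\<integral>x. (\<psi> x)\<^sup>2 \<partial>lborel) \<noteq> 0"
    using integral_nonneg_eq_0_iff_AE[OF i] nAE by simp
  moreover have "0 \<le> (\<integral>x. (\<psi> x)\<^sup>2 \<partial>lborel)" by (simp add: integral_nonneg)
  ultimately show "0 < (\<integral>x. (\<psi> x)\<^sup>2 \<partial>lborel)" by linarith
  show "0 \<le> (\<integral>x. (\<psi>' x)\<^sup>2 \<partial>lborel)" by (simp add: integral_nonneg)
  have i2: "integrable lborel (\<lambda>x. dr x * (\<psi> x)\<^sup>2)"
  proof (rule Bochner_Integration.integrable_bound[where f = "\<lambda>x. B * (\<psi> x)\<^sup>2"])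
    show "integrable lborel (\<lambda>x. B * (\<psi> x)\<^sup>2)" using i by simp
    show "(\<lambda>x. dr x * (\<psi> x)\<^sup>2) \<in> borel_measurable lborel" using dm m by measurable
    have "\<bar>dr x\<bar> * (\<psi> x)\<^sup>2 \<le> \<bar>B\<bar> * (\<psi> x)\<^sup>2" for x
      using B[of x] by (intro mult_right_mono) auto
    then show "AE x in lborel. norm (dr x * (\<psi> x)\<^sup>2) \<le> norm (B * (\<psi> x)\<^sup>2)"
      by (simp add: abs_mult)
  qed
  have "(\<integral>x. dr x * (\<psi> x)\<^sup>2 \<partial>lborel) \<le> (\<integral>x. B * (\<psi> x)\<^sup>2 \<partial>lborel)"
    using i2 i B by (intro integral_mono) (auto intro!: mult_right_mono simp: abs_le_iff)
  then show "(\<integral>x. dr x * (\<psi> x)\<^sup>2 \<partial>lborel) \<le> B * (\<integral>x. (\<psi> x)\<^sup>2 \<partial>lborel)" by simp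
qed


lemma Ag_hor_open:
  fixes dr :: "real \<Rightarrow> real"
  assumes g: "g > 0" and M: "M \<noteq> 0" and Mcp: "0 < Mc g dr"
    and B: "\<And>x. \<bar>dr x\<bar> \<le> B" and dm: "dr \<in> borel_measurable lborel"
    and ex: "\<exists>\<psi> \<psi>'. H1 \<psi> \<psi>' \<and> \<not>(AE x in lborel. \<psi> x = 0) \<and> 0 < (\<integral>x. dr x * (\<psi> x)\<^sup>2 \<partial>lborel)"
  shows "open (Ag_hor g dr M)"
proof -
  define NN where "NN \<psi> = (\<integral>x. (\<psi> x)\<^sup>2 \<partial>lborel)" for \<psi> :: "real \<Rightarrow> real"
  define PP where "PP \<psi> = (\<integral>x. dr x * (\<psi> x)\<^sup>2 \<partial>lborel)" for \<psi> :: "real \<Rightarrow> real"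
  define Psi where "Psi = {(\<psi>, \<psi>'). H1 \<psi> \<psi>' \<and> \<not>(AE x in lborel. \<psi> x = 0)}"
  define V where "V = (\<lambda>(\<psi>, \<psi>'). {\<xi>::real\<times>real. \<xi> \<noteq> 0 \<and> ereal (\<bar>fst \<xi> * M\<bar> / norm \<xi>) < Mc g dr \<and>
        ((norm \<xi>)\<^sup>2 * NN \<psi> + NN \<psi>') * (M * fst \<xi>)\<^sup>2 < g * (norm \<xi>)\<^sup>2 * PP \<psi>})"
  define Sset where "Sset \<xi> = {((g * (norm \<xi>)\<^sup>2 * (\<integral>x. dr x * (\<psi> x)\<^sup>2 \<partial>lborel) / (M * fst \<xi>)\<^sup>2
                                - (\<integral>x. (\<psi>' x)\<^sup>2 \<partial>lborel)) / (\<integral>x. (\<psi> x)\<^sup>2 \<partial>lborel)) |\<psi> \<psi>'.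
                        H1 \<psi> \<psi>' \<and> \<not> (AE x in lborel. \<psi> x = 0)}" for \<xi> :: "real \<times> real"
  have Sf: "S_fun g dr M \<xi> = sqrt (Sup (Sset \<xi>))" for \<xi> by (simp add: S_fun_def Sset_def)
  have facts: "0 < NN \<psi>" "0 \<le> NN \<psi>'" "PP \<psi> \<le> B * NN \<psi>" if "(\<psi>, \<psi>') \<in> Psi" for \<psi> \<psi>'
    using Psi_facts[of \<psi> \<psi>' dr B] that B dm by (auto simp: Psi_def NN_def PP_def)
  have bdd: "bdd_above (Sset \<xi>)" for \<xi>
  proof (rule bdd_aboveI)
    fix e assume "e \<in> Sset \<xi>"
    then obtain \<psi> \<psi>' where p: "(\<psi>, \<psi>') \<in> Psi" and e: "e = (g * (norm \<xi>)\<^sup>2 * PP \<psi> / (M * fst \<xi>)\<^sup>2 - NN \<psi>') / NN \<psi>"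
      by (auto simp: Sset_def Psi_def NN_def PP_def)
    show "e \<le> g * (norm \<xi>)\<^sup>2 / (M * fst \<xi>)\<^sup>2 * B"
      unfolding e by (rule arith1) (use facts[OF p] g in auto)
  qed
  obtain \<psi>0 \<psi>0' where p0: "(\<psi>0, \<psi>0') \<in> Psi" and P0: "0 < PP \<psi>0"
    using ex by (auto simp: Psi_def PP_def)
  have ne: "Sset \<xi> \<noteq> {}" for \<xi> using p0 by (auto simp: Sset_def Psi_def)
  have eq: "Ag_hor g dr M = (\<Union>p\<in>Psi. V p)"
  proof (intro set_eqI iffI)
    fix \<xi> :: "real \<times> real" assume A: "\<xi> \<in> Ag_hor g dr M"
    then have nz: "\<xi> \<noteq> 0" by (simp add: Ag_hor_def)
    then have np: "norm \<xi> > 0" by simp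
    show "\<xi> \<in> (\<Union>p\<in>Psi. V p)"
    proof (cases "fst \<xi> = 0")
      case True
      have "\<xi> \<in> V (\<psi>0, \<psi>0')" using nz True Mcp np P0 g by (simp add: V_def zero_ereal_def[symmetric])
      then show ?thesis using p0 by blast
    next
      case False
      then have c: "ereal (\<bar>fst \<xi> * M\<bar> / norm \<xi>) < Mc g dr" and s: "norm \<xi> < sqrt (Sup (Sset \<xi>))"
        using A by (auto simp: Ag_hor_def Sf)
      have "sqrt ((norm \<xi>)\<^sup>2) < sqrt (Sup (Sset \<xi>))" using s by simp
      then have "(norm \<xi>)\<^sup>2 < Sup (Sset \<xi>)" by (simp only: real_sqrt_less_iff)
      then obtain e where "e \<in> Sset \<xi>" "(norm \<xi>)\<^sup>2 < e" using less_cSup_iff[OF ne bdd] by blast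
      then obtain \<psi> \<psi>' where p: "(\<psi>, \<psi>') \<in> Psi"
        and lt: "(norm \<xi>)\<^sup>2 < (g * (norm \<xi>)\<^sup>2 * PP \<psi> / (M * fst \<xi>)\<^sup>2 - NN \<psi>') / NN \<psi>"
        by (auto simp: Sset_def Psi_def NN_def PP_def)
      have q: "(M * fst \<xi>)\<^sup>2 > 0" using M False by simp
      have "((norm \<xi>)\<^sup>2 * NN \<psi> + NN \<psi>') * (M * fst \<xi>)\<^sup>2 < g * (norm \<xi>)\<^sup>2 * PP \<psi>"
        using lt arith2[OF facts(1)[OF p] q] by blast
      then have "\<xi> \<in> V (\<psi>, \<psi>')" using nz c by (simp add: V_def)
      then show ?thesis using p by blast
    qed
  next
    fix \<xi> :: "real \<times> real" assume "\<xi> \<in> (\<Union>p\<in>Psi. V p)"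
    then obtain \<psi> \<psi>' where p: "(\<psi>, \<psi>') \<in> Psi" and v: "\<xi> \<in> V (\<psi>, \<psi>')" by auto
    then have nz: "\<xi> \<noteq> 0" and c: "ereal (\<bar>fst \<xi> * M\<bar> / norm \<xi>) < Mc g dr"
      and pl: "((norm \<xi>)\<^sup>2 * NN \<psi> + NN \<psi>') * (M * fst \<xi>)\<^sup>2 < g * (norm \<xi>)\<^sup>2 * PP \<psi>"
      by (auto simp: V_def)
    show "\<xi> \<in> Ag_hor g dr M"
    proof (cases "fst \<xi> = 0")
      case True then show ?thesis using nz by (simp add: Ag_hor_def)
    next
      case False
      have q: "(M * fst \<xi>)\<^sup>2 > 0" using M False by simp
      have lt: "(norm \<xi>)\<^sup>2 < (g * (norm \<xi>)\<^sup>2 * PP \<psi> / (M * fst \<xi>)\<^sup>2 - NN \<psi>') / NN \<psi>"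
        using pl arith2[OF facts(1)[OF p] q] by blast
      have "(g * (norm \<xi>)\<^sup>2 * PP \<psi> / (M * fst \<xi>)\<^sup>2 - NN \<psi>') / NN \<psi> \<in> Sset \<xi>"
        using p by (auto simp: Sset_def Psi_def NN_def PP_def)
      then have "(norm \<xi>)\<^sup>2 < Sup (Sset \<xi>)" using lt cSup_upper[OF _ bdd] by (meson less_le_trans)
      then have "sqrt ((norm \<xi>)\<^sup>2) < sqrt (Sup (Sset \<xi>))" by (simp only: real_sqrt_less_iff)
      then have s: "norm \<xi> < S_fun g dr M \<xi>" by (simp add: Sf)
      have "0 < \<bar>fst \<xi> * M\<bar> / norm \<xi>" using False M nz by simp
      then show ?thesis using c s nz by (simp add: Ag_hor_def)
    qed
  qed
  have "open (V p)" for p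
  proof -
    obtain \<psi> \<psi>' where pe: "p = (\<psi>, \<psi>')" by fastforce
    have o1: "open {\<xi>::real\<times>real. ((norm \<xi>)\<^sup>2 * NN \<psi> + NN \<psi>') * (M * fst \<xi>)\<^sup>2 < g * (norm \<xi>)\<^sup>2 * PP \<psi>}"
      by (rule open_Collect_less) (intro continuous_intros)+
    have o0: "open {\<xi>::real\<times>real. \<xi> \<noteq> 0}" by (simp add: open_Collect_neq continuous_on_const continuous_on_id)
    show ?thesis
    proof (cases "Mc g dr")
      case (real m)
      have "V p = {\<xi>. \<xi> \<noteq> 0} \<inter> {\<xi>. \<bar>fst \<xi> * M\<bar> < m * norm \<xi>} \<inter>
          {\<xi>::real\<times>real. ((norm \<xi>)\<^sup>2 * NN \<psi> + NN \<psi>') * (M * fst \<xi>)\<^sup>2 < g * (norm \<xi>)\<^sup>2 * PP \<psi>}"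
        by (auto simp: V_def pe real pos_divide_less_eq)
      moreover have "open {\<xi>::real\<times>real. \<bar>fst \<xi> * M\<bar> < m * norm \<xi>}"
        by (rule open_Collect_less) (intro continuous_intros)+
      ultimately show ?thesis using o0 o1 by auto
    next
      case PInf
      have "V p = {\<xi>. \<xi> \<noteq> 0} \<inter>
          {\<xi>::real\<times>real. ((norm \<xi>)\<^sup>2 * NN \<psi> + NN \<psi>') * (M * fst \<xi>)\<^sup>2 < g * (norm \<xi>)\<^sup>2 * PP \<psi>}"
        by (auto simp: V_def pe PInf)
      then show ?thesis using o0 o1 by auto
    next
      case MInf then show ?thesis using Mcp by simp
    qed
  qed
  then show ?thesis unfolding eq by auto
qed


lemma Ag_hor_props:
  fixes dr :: "real \<Rightarrow> real"
  assumes L: "L > 0" and op: "open (Ag_hor g dr M)"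
  shows "Ag_props L (Ag_hor g dr M)"
  unfolding Ag_props_def Let_def
proof (intro conjI allI impI)
  fix a b :: real assume "(a, b) \<in> Ag_hor g dr M"
  then show "(a, - b) \<in> Ag_hor g dr M" "(- a, b) \<in> Ag_hor g dr M"
    by (auto simp: Ag_hor_def S_fun_def norm_Pair zero_prod_def)
next
  let ?P = "{\<xi> \<in> Ag_hor g dr M. \<exists>m n :: int. \<xi> = (of_int m / L, of_int n / L)}"
  have "?P \<subseteq> (\<lambda>(m::int, n::int). (of_int m / L, of_int n / L)) ` UNIV" by auto
  then show "countable ?P" by (rule countable_subset) simp
  define f where "f n = (0::real, of_int n / L)" for n :: int
  have "f ` {0<..} \<subseteq> ?P"
  proof
    fix \<xi> assume "\<xi> \<in> f ` {0<..}"
    then obtain n where n: "n > 0" and x: "\<xi> = f n" by auto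
    have "\<xi> \<in> Ag_hor g dr M" using n L by (simp add: x f_def Ag_hor_def zero_prod_def)
    moreover have "\<xi> = (of_int 0 / L, of_int n / L)" by (simp add: x f_def)
    ultimately show "\<xi> \<in> ?P" by blast
  qed
  moreover have "inj_on f {0<..}" using L by (auto simp: inj_on_def f_def)
  ultimately show "infinite ?P"
    by (meson finite_imageD finite_subset infinite_Ioi)
next
  have "(0, 1) \<in> Ag_hor g dr M" by (simp add: Ag_hor_def zero_prod_def)
  then show "Ag_hor g dr M \<noteq> {}" by blast
  show "open (Ag_hor g dr M)" by (rule op)
qed

theorem proposition2p3:
  fixes L g M :: real and rho rho' :: "real \<Rightarrow> real" and x30 :: real
  assumes "L > 0" and "g > 0"
    and "rho \<in> borel_measurable lborel" and "bounded (range rho)"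
    and "\<And>x. (rho has_real_derivative rho' x) (at x)"
    and "\<forall>n x. ((deriv ^^ n) rho') differentiable (at x)"
    and "\<exists>R. \<forall>x. R < \<bar>x\<bar> \<longrightarrow> rho' x = 0"
    and "(INF x. rho x) > 0"
    and "rho' x30 > 0"
  shows "(M \<noteq> 0 \<longrightarrow> Ag_props L (Ag_hor g rho' M)) \<and>
         (0 < \<bar>M\<bar> \<and> ereal \<bar>M\<bar> < Mc g rho' \<longrightarrow> Ag_props L (Ag_ver g rho' M))"
proof (intro conjI impI)
  assume "0 < \<bar>M\<bar> \<and> ereal \<bar>M\<bar> < Mc g rho'"
  show "Ag_props L (Ag_ver g rho' M)"
    unfolding Ag_ver_def by (rule Ag_ver_gen[OF assms(1)])
next
  assume M: "M \<noteq> 0"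
  have cd: "continuous_on UNIV rho'"
    using assms(6) spec[OF spec[OF assms(6), of 0]]
    by (simp add: continuous_at_imp_continuous_on differentiable_imp_continuous_within)
  obtain R where R: "\<And>x. R < \<bar>x\<bar> \<Longrightarrow> rho' x = 0" using assms(7) by blast
  have "compact (rho' ` cball 0 \<bar>R\<bar>)"
    by (rule compact_continuous_image) (auto intro: continuous_on_subset[OF cd])
  then obtain B where B0: "\<And>y. y \<in> rho' ` cball 0 \<bar>R\<bar> \<Longrightarrow> norm y \<le> B"
    using compact_imp_bounded bounded_iff by metis
  have B: "\<bar>rho' x\<bar> \<le> max B 0" for x
  proof (cases "\<bar>x\<bar> \<le> \<bar>R\<bar>")
    case True then have "norm (rho' x) \<le> B" by (intro B0) auto
    then show ?thesis by simp
  next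
    case False then show ?thesis using R[of x] by simp
  qed
  have dm: "rho' \<in> borel_measurable lborel" by (rule cont_meas[OF cd])
  have ex: "\<exists>\<psi> \<psi>'. H1 \<psi> \<psi>' \<and> \<not>(AE x in lborel. \<psi> x = 0) \<and> 0 < (\<integral>x. rho' x * (\<psi> x)\<^sup>2 \<partial>lborel)
           \<and> 0 < (\<integral>x. (\<psi>' x)\<^sup>2 \<partial>lborel)" by (rule bump_exists[OF cd assms(9)])
  have Mcp: "0 < Mc g rho'" by (rule Mc_pos[OF assms(2) ex])
  have "open (Ag_hor g rho' M)"
    by (rule Ag_hor_open[OF assms(2) M Mcp B dm]) (use ex in blast)
  then show "Ag_props L (Ag_hor g rho' M)" by (rule Ag_hor_props[OF assms(1)])
qed

end
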